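(* Let $N$ be a positive integer, $a,b,c\in\mathbb{R}$ with $a\neq0$, $W=[w_{ij}]\in\mathbb{R}^{N\times N}$ with $w_{ii}=0$ for all $i$, $\Delta=\mathrm{diag}(\delta_1,\dots,\delta_N)$ with $\delta_i\in\{0,1\}$, and $h>0$. Put $\Phi_s=e^{ah}I_N+\frac{c}{a}(e^{ah}-1)W$ and $\Psi_s=\frac{b}{a}(e^{ah}-1)\Delta$, and assume $0$ is not an eigenvalue of $\Phi_s$. Then the discrete-time system $X(k+1)=\Phi_sX(k)+\Psi_sU(k)$ is controllable if and only if the continuous-time system $\dot X(t)=(aI_N+cW)X(t)+b\Delta U(t)$ is controllable.
   Context: The continuous-time system is controllable in the usual sense (equivalently $\mathrm{rank}[sI_N-(aI_N+cW),\ b\Delta]=N$ for all $s\in\mathbb{C}$). The discrete-time system is called controllable if every initial state can be steered to the origin in finitely many steps. *)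

theory Defs
  imports "HOL-Analysis.Analysis"
begin

text \<open>Continuous-time LTI system x'(t) = A x(t) + B u(t): controllable in the usual sense,
  i.e. every state can be transferred to every other state in some finite time T > 0
  by a (continuous) control input.\<close>
definition ct_controllable :: "real^'n^'n \<Rightarrow> real^'m^'n \<Rightarrow> bool" where
  "ct_controllable A B \<longleftrightarrow>
     (\<forall>x0 x1. \<exists>T>0. \<exists>u :: real \<Rightarrow> real^'m. \<exists>x :: real \<Rightarrow> real^'n.
        continuous_on {0..T} u \<and> x 0 = x0 \<and> x T = x1 \<and>
        (\<forall>t\<in>{0..T}. (x has_vector_derivative (A *v x t + B *v u t)) (at t within {0..T})))"

text \<open>State sequence of the discrete-time system X(k+1) = Phi X(k) + Psi U(k), X(0) = x0.\<close>
primrec dt_state :: "real^'n^'n \<Rightarrow> real^'m^'n \<Rightarrow> real^'n \<Rightarrow> (nat \<Rightarrow> real^'m) \<Rightarrow> nat \<Rightarrow> real^'n" where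
  "dt_state Phi Psi x0 U 0 = x0"
| "dt_state Phi Psi x0 U (Suc k) = Phi *v dt_state Phi Psi x0 U k + Psi *v U k"

text \<open>Discrete-time controllability: every initial state can be steered to the origin
  in finitely many steps.\<close>
definition dt_controllable :: "real^'n^'n \<Rightarrow> real^'m^'n \<Rightarrow> bool" where
  "dt_controllable Phi Psi \<longleftrightarrow>
     (\<forall>x0. \<exists>k. \<exists>U. dt_state Phi Psi x0 U k = 0)"

end

theory Submission
  imports Defs
begin

definition krylov :: "real^'n^'n \<Rightarrow> real^'m^'n \<Rightarrow> (real^'n) set" where
  "krylov A B = \<Inter>{S. subspace S \<and> range (\<lambda>u. B *v u) \<subseteq> S \<and> (\<forall>x\<in>S. A *v x \<in> S)}"

lemma krylov_subspace: "subspace (krylov A B)"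
  unfolding krylov_def by (rule subspace_Inter) auto

lemma krylov_range: "B *v u \<in> krylov A B"
  unfolding krylov_def by auto

lemma krylov_inv: "x \<in> krylov A B \<Longrightarrow> A *v x \<in> krylov A B"
  unfolding krylov_def by auto

lemma krylov_min: "subspace S \<Longrightarrow> (\<And>u. B *v u \<in> S) \<Longrightarrow> (\<And>x. x \<in> S \<Longrightarrow> A *v x \<in> S) \<Longrightarrow> krylov A B \<subseteq> S"
  unfolding krylov_def by auto

lemma krylov_scale:
  fixes A :: "real^'n^'n" and B :: "real^'m^'n"
  assumes t: "t \<noteq> 0"
  shows "krylov (mat 1 + t *\<^sub>R A) (t *\<^sub>R B) = krylov A B"
proof -
  have "{S. subspace S \<and> range (\<lambda>u. (t *\<^sub>R B) *v u) \<subseteq> S \<and> (\<forall>x\<in>S. (mat 1 + t *\<^sub>R A) *v x \<in> S)}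
      = {S. subspace S \<and> range (\<lambda>u. B *v u) \<subseteq> S \<and> (\<forall>x\<in>S. A *v x \<in> S)}"
  proof (intro Collect_cong iffI conjI)
    fix S :: "(real^'n) set"
    {
      assume S: "subspace S \<and> range (\<lambda>u. (t *\<^sub>R B) *v u) \<subseteq> S \<and> (\<forall>x\<in>S. (mat 1 + t *\<^sub>R A) *v x \<in> S)"
      show "subspace S" using S by blast
      show "range (\<lambda>u. B *v u) \<subseteq> S"
      proof
        fix y assume "y \<in> range (\<lambda>u. B *v u)"
        then obtain u where y: "y = B *v u" by auto
        have "(t *\<^sub>R B) *v ((1/t) *\<^sub>R u) \<in> S" using S by blast
        also have "(t *\<^sub>R B) *v ((1/t) *\<^sub>R u) = y"
          using t by (simp add: y matrix_scaleR_vector_ac[symmetric] scaleR_matrix_vector_assoc[symmetric])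
        finally show "y \<in> S" .
      qed
      show "\<forall>x\<in>S. A *v x \<in> S"
      proof
        fix x assume x: "x \<in> S"
        have "(mat 1 + t *\<^sub>R A) *v x \<in> S" using S x by blast
        then have "(1/t) *\<^sub>R ((mat 1 + t *\<^sub>R A) *v x - x) \<in> S"
          using S x by (meson subspace_diff subspace_scale)
        also have "(1/t) *\<^sub>R ((mat 1 + t *\<^sub>R A) *v x - x) = A *v x"
          using t by (simp add: matrix_vector_mult_add_rdistrib scaleR_matrix_vector_assoc[symmetric])
        finally show "A *v x \<in> S" .
      qed
    }
    {
      assume S: "subspace S \<and> range (\<lambda>u. B *v u) \<subseteq> S \<and> (\<forall>x\<in>S. A *v x \<in> S)"
      show "subspace S" using S by blast
      show "range (\<lambda>u. (t *\<^sub>R B) *v u) \<subseteq> S"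
      proof
        fix y assume "y \<in> range (\<lambda>u. (t *\<^sub>R B) *v u)"
        then obtain u where y: "y = (t *\<^sub>R B) *v u" by auto
        have "B *v u \<in> S" using S by blast
        then have "t *\<^sub>R (B *v u) \<in> S" using S by (meson subspace_scale)
        then show "y \<in> S" by (simp add: y scaleR_matrix_vector_assoc)
      qed
      show "\<forall>x\<in>S. (mat 1 + t *\<^sub>R A) *v x \<in> S"
      proof
        fix x assume x: "x \<in> S"
        have "x + t *\<^sub>R (A *v x) \<in> S" using S x by (meson subspace_add subspace_scale)
        then show "(mat 1 + t *\<^sub>R A) *v x \<in> S"
          by (simp add: matrix_vector_mult_add_rdistrib scaleR_matrix_vector_assoc[symmetric])
      qed
    }
  qed
  then show ?thesis unfolding krylov_def by simp
qed


lemma lin_inv_image_eq: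
  fixes f :: "real^'n \<Rightarrow> real^'n"
  assumes "linear f" "inj f" "subspace S" "\<And>x. x \<in> S \<Longrightarrow> f x \<in> S"
  shows "f ` S = S"
proof (rule subspace_dim_equal)
  show "subspace (f ` S)" using assms by (simp add: linear_subspace_image)
  show "f ` S \<subseteq> S" using assms by auto
  have "dim (f ` S) = dim S"
    using assms by (intro dim_image_eq) (auto simp: inj_on_def inj_def)
  then show "dim S \<le> dim (f ` S)" by simp
qed (use assms in auto)

lemma dt_state_in: "dt_state Phi Psi x0 U k - (((*v) Phi) ^^ k) x0 \<in> krylov Phi Psi"
proof (induction k)
  case 0 then show ?case using krylov_subspace subspace_0 by auto
next
  case (Suc k)
  have "dt_state Phi Psi x0 U (Suc k) - (((*v) Phi) ^^ Suc k) x0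
        = Phi *v (dt_state Phi Psi x0 U k - (((*v) Phi) ^^ k) x0) + Psi *v U k"
    by (simp add: matrix_vector_mult_diff_distrib)
  also have "\<dots> \<in> krylov Phi Psi"
    using Suc krylov_inv krylov_range krylov_subspace subspace_add by blast
  finally show ?case .
qed

lemma dt_state_add: "dt_state Phi Psi (x + y) (\<lambda>j. U j + V j) k = dt_state Phi Psi x U k + dt_state Phi Psi y V k"
  by (induction k) (simp_all add: algebra_simps)

lemma dt_state_scale: "dt_state Phi Psi (c *\<^sub>R x) (\<lambda>j. c *\<^sub>R U j) k = c *\<^sub>R dt_state Phi Psi x U k"
  by (induction k) (simp_all add: algebra_simps)

lemma dt_state_pad:
  assumes "dt_state Phi Psi x0 U k = 0"
  shows "dt_state Phi Psi x0 (\<lambda>j. if j < k then U j else 0) (k + m) = 0"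
proof -
  have eq: "j \<le> k \<Longrightarrow> dt_state Phi Psi x0 (\<lambda>j. if j < k then U j else 0) j = dt_state Phi Psi x0 U j" for j
    by (induction j) auto
  show ?thesis
    by (induction m) (simp_all add: eq assms)
qed

lemma dt_state_shift: "dt_state Phi Psi y (\<lambda>j. case j of 0 \<Rightarrow> 0 | Suc i \<Rightarrow> U i) (Suc j) = dt_state Phi Psi (Phi *v y) U j"
  by (induction j) auto

lemma dt_kry:
  fixes Phi :: "real^'n^'n" and Psi :: "real^'m^'n"
  assumes inj0: "\<And>v. Phi *v v = 0 \<Longrightarrow> v = 0"
  shows "dt_controllable Phi Psi \<longleftrightarrow> krylov Phi Psi = UNIV"
proof -
  define f where "f = (\<lambda>x. Phi *v x)"
  have lf: "linear f" unfolding f_def by simp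
  have injf: "inj f"
  proof (rule injI)
    fix x y assume "f x = f y"
    then have "Phi *v (x - y) = 0" by (simp add: f_def matrix_vector_mult_diff_distrib)
    then show "x = y" using inj0[of "x - y"] by simp
  qed
  have surjf: "surj f" using linear_injective_imp_surjective[OF lf injf] by simp
  obtain g where lg: "linear g" and fg: "f \<circ> g = id"
    using linear_surjective_right_inverse[OF lf surjf] by blast
  have fg': "f (g x) = x" for x using fg by (metis comp_apply id_apply)
  have injg: "inj g" by (metis fg' injI)
  let ?K = "krylov Phi Psi"
  have Ksub: "subspace ?K" by (rule krylov_subspace)
  have fK: "f ` ?K = ?K"
    by (rule lin_inv_image_eq[OF lf injf Ksub]) (simp add: f_def krylov_inv)
  have pow: "((f ^^ k) x \<in> ?K) \<Longrightarrow> x \<in> ?K" for k x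
  proof (induction k arbitrary: x)
    case 0 then show ?case by simp
  next
    case (Suc k)
    have "(f ^^ k) (f x) \<in> ?K" using Suc.prems by (simp add: funpow_Suc_right del: funpow.simps)
    then have "f x \<in> ?K" using Suc.IH by blast
    then obtain y where "y \<in> ?K" "f y = f x" using fK by (metis imageE)
    then show ?case using injf by (metis injD)
  qed
  show ?thesis
  proof
    assume dt: "dt_controllable Phi Psi"
    show "?K = UNIV"
    proof (rule set_eqI, rule iffI)
      fix x0 :: "real^'n"
      obtain k U where z: "dt_state Phi Psi x0 U k = 0" using dt unfolding dt_controllable_def by blast
      have "- ((f ^^ k) x0) \<in> ?K" using dt_state_in[of Phi Psi x0 U k] z by (simp add: f_def)
      then have "(f ^^ k) x0 \<in> ?K" using Ksub subspace_neg by fastforce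
      then show "x0 \<in> ?K" by (rule pow)
    qed simp
  next
    assume KU: "?K = UNIV"
    define S where "S = {x0. \<exists>k U. dt_state Phi Psi x0 U k = 0}"
    have S0: "0 \<in> S"
    proof -
      have "dt_state Phi Psi 0 (\<lambda>_. 0) 0 = 0" by simp
      then show ?thesis unfolding S_def by blast
    qed
    have Sadd: "x + y \<in> S" if "x \<in> S" "y \<in> S" for x y
    proof -
      obtain k U where k: "dt_state Phi Psi x U k = 0" using \<open>x \<in> S\<close> S_def by blast
      obtain l V where l: "dt_state Phi Psi y V l = 0" using \<open>y \<in> S\<close> S_def by blast
      have a: "dt_state Phi Psi x (\<lambda>j. if j < k then U j else 0) (k + l) = 0" by (rule dt_state_pad[OF k])
      have b: "dt_state Phi Psi y (\<lambda>j. if j < l then V j else 0) (l + k) = 0" by (rule dt_state_pad[OF l])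
      have "dt_state Phi Psi (x + y) (\<lambda>j. (if j < k then U j else 0) + (if j < l then V j else 0)) (k + l) = 0"
        using a b by (simp add: dt_state_add add.commute)
      then show ?thesis unfolding S_def by blast
    qed
    have Sscale: "c *\<^sub>R x \<in> S" if "x \<in> S" for x c
    proof -
      obtain k U where k: "dt_state Phi Psi x U k = 0" using \<open>x \<in> S\<close> S_def by blast
      have "dt_state Phi Psi (c *\<^sub>R x) (\<lambda>j. c *\<^sub>R U j) k = 0" by (simp add: dt_state_scale k)
      then show ?thesis unfolding S_def by blast
    qed
    have Ssub: "subspace S" unfolding subspace_def using S0 Sadd Sscale by blast
    have gS: "g x \<in> S" if "x \<in> S" for x
    proof -
      obtain k U where k: "dt_state Phi Psi x U k = 0" using \<open>x \<in> S\<close> S_def by blast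
      have "dt_state Phi Psi (g x) (\<lambda>j. case j of 0 \<Rightarrow> 0 | Suc i \<Rightarrow> U i) (Suc k) = 0"
        using dt_state_shift[of Phi Psi "g x" U k] fg'[of x] k by (simp add: f_def)
      then show ?thesis unfolding S_def by blast
    qed
    have gSeq: "g ` S = S" by (rule lin_inv_image_eq[OF lg injg Ssub gS])
    have fS: "f x \<in> S" if "x \<in> S" for x
    proof -
      obtain y where "y \<in> S" "x = g y" using gSeq \<open>x \<in> S\<close> by blast
      then show ?thesis using fg' by simp
    qed
    have PsiS: "Psi *v u \<in> S" for u
    proof -
      define y where "y = g (- (Psi *v u))"
      have "dt_state Phi Psi y (\<lambda>_. u) 1 = 0"
        using fg'[of "- (Psi *v u)"] by (simp add: y_def f_def)
      then have "y \<in> S" unfolding S_def by blast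
      then have "f y \<in> S" by (rule fS)
      then have "- f y \<in> S" using Ssub subspace_neg by blast
      then show ?thesis using fg'[of "- (Psi *v u)"] by (simp add: y_def)
    qed
    have "?K \<subseteq> S" by (rule krylov_min[OF Ssub PsiS]) (use fS f_def in auto)
    then have "S = UNIV" using KU by auto
    then show "dt_controllable Phi Psi"
    proof (unfold dt_controllable_def, intro allI)
      fix x0 :: "real^'n"
      have "x0 \<in> S" using \<open>S = UNIV\<close> by simp
      then show "\<exists>k U. dt_state Phi Psi x0 U k = 0" unfolding S_def by simp
    qed
  qed
qed


lemma ct_imp_kry:
  fixes A :: "real^'n^'n" and B :: "real^'m^'n"
  assumes ct: "ct_controllable A B"
  shows "krylov A B = UNIV"
proof (rule ccontr)
  let ?K = "krylov A B"
  assume "?K \<noteq> UNIV"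
  then obtain x1 where x1: "x1 \<notin> ?K" by blast
  obtain Tb where Tb: "0 \<notin> Tb" "Tb \<subseteq> ?K" "pairwise orthogonal Tb" "independent Tb" "span Tb = ?K"
    using orthogonal_basis_subspace[OF krylov_subspace] by metis
  have finTb: "finite Tb" using Tb(4) independent_imp_finite by blast
  define P where "P = (\<lambda>x::real^'n. x - (\<Sum>b\<in>Tb. (b \<bullet> x / (b \<bullet> b)) *\<^sub>R b))"
  have Pdiff: "x - P x \<in> ?K" for x
  proof -
    have "(\<Sum>b\<in>Tb. (b \<bullet> x / (b \<bullet> b)) *\<^sub>R b) \<in> span Tb"
      by (intro span_sum span_mul span_base)
    then show ?thesis using Tb(5) by (simp add: P_def)
  qed
  have Porth: "P x \<bullet> k = 0" if "k \<in> ?K" for x k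
  proof -
    have "orthogonal k (P x)" unfolding P_def
      by (rule Gram_Schmidt_step[OF Tb(3)]) (use that Tb(5) in simp)
    then show ?thesis by (simp add: orthogonal_def inner_commute)
  qed
  have PK: "P k = 0" if "k \<in> ?K" for k
  proof -
    have "k - (k - P k) \<in> ?K" using that Pdiff krylov_subspace subspace_diff by blast
    then have "P k \<bullet> P k = 0" using Porth by simp
    then show ?thesis by simp
  qed
  have blP: "bounded_linear P" unfolding P_def
    by (intro bounded_linear_sub bounded_linear_ident bounded_linear_sum bounded_linear_compose[OF bounded_linear_scaleR_left]
         bounded_linear_compose[OF bounded_linear_divide] bounded_linear_inner_right)
  interpret P: bounded_linear P by (rule blP)
  have Px1: "P x1 \<noteq> 0" using Pdiff[of x1] x1 by auto
  have blA: "bounded_linear (\<lambda>x. A *v x)"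
    by (simp add: linear_conv_bounded_linear)
  obtain C where C: "C > 0" "\<And>x. norm (A *v x) \<le> norm x * C"
    using bounded_linear.pos_bounded[OF blA] by blast
  obtain T u x where T: "T > 0" and ucont: "continuous_on {0..T} u" and x0: "x 0 = 0" and xT: "x T = x1"
    and xd: "\<And>t. t \<in> {0..T} \<Longrightarrow> (x has_vector_derivative (A *v x t + B *v u t)) (at t within {0..T})"
    using ct unfolding ct_controllable_def by blast
  define y where "y = (\<lambda>t. P (x t))"
  define phi where "phi = (\<lambda>t. exp (-2*C*t) * (y t \<bullet> y t))"
  have key: "y t \<bullet> P (A *v x t + B *v u t) \<le> 2 * C * (y t \<bullet> y t) / 2" for t
  proof -
    have e1: "P (A *v x t + B *v u t) = P (A *v x t)"
      using PK[OF krylov_range[of B "u t" A]] by (simp add: P.add)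
    have e2: "y t \<bullet> P (A *v x t) = y t \<bullet> (A *v x t)"
    proof -
      have "y t \<bullet> (A *v x t - P (A *v x t)) = 0"
        using Porth[OF Pdiff[of "A *v x t"]] by (simp add: y_def)
      then show ?thesis by (simp add: inner_diff_right)
    qed
    have e3: "y t \<bullet> (A *v x t) = y t \<bullet> (A *v y t)"
    proof -
      have "x t - y t \<in> ?K" using Pdiff by (simp add: y_def)
      then have "A *v (x t - y t) \<in> ?K" by (rule krylov_inv)
      then have "y t \<bullet> (A *v (x t - y t)) = 0" using Porth by (simp add: y_def)
      then show ?thesis by (simp add: matrix_vector_mult_diff_distrib inner_diff_right)
    qed
    have "y t \<bullet> (A *v y t) \<le> norm (y t) * norm (A *v y t)" by (rule norm_cauchy_schwarz)
    also have "\<dots> \<le> norm (y t) * (norm (y t) * C)" by (simp add: C(2) mult_left_mono)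
    also have "\<dots> = C * (y t \<bullet> y t)" by (simp add: power2_norm_eq_inner[symmetric] power2_eq_square)
    finally show ?thesis using e1 e2 e3 by simp
  qed
  have dphi: "(phi has_real_derivative
      (exp (-2*C*t) * (2 * (y t \<bullet> P (A *v x t + B *v u t))) + (-2*C) * exp (-2*C*t) * (y t \<bullet> y t)))
      (at t within {0..T})" if "t \<in> {0..T}" for t
  proof -
    have dy: "(y has_vector_derivative P (A *v x t + B *v u t)) (at t within {0..T})"
      unfolding y_def by (rule P.has_vector_derivative[OF xd[OF that]])
    have dyy: "((\<lambda>t. y t \<bullet> y t) has_real_derivative (2 * (y t \<bullet> P (A *v x t + B *v u t)))) (at t within {0..T})"
      unfolding has_real_derivative_iff_has_vector_derivative
      using bounded_bilinear.has_vector_derivative[OF bounded_bilinear_inner dy dy]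
      by (simp add: inner_commute)
    have de: "((\<lambda>t. exp (-2*C*t)) has_real_derivative (-2*C) * exp (-2*C*t)) (at t within {0..T})"
      by (auto intro!: derivative_eq_intros)
    show ?thesis unfolding phi_def
      using DERIV_mult[OF de dyy] by (simp add: algebra_simps)
  qed
  have "phi T \<le> phi 0"
  proof (rule DERIV_nonpos_imp_decreasing_open[of 0 T phi])
    show "0 \<le> T" using T by simp
    show "continuous_on {0..T} phi" by (rule DERIV_continuous_on[OF dphi])
    fix t assume t: "0 < t" "t < T"
    have "at t within {0..T} = at t" using t by (simp add: at_within_Icc_at)
    then have d: "(phi has_real_derivative
      (exp (-2*C*t) * (2 * (y t \<bullet> P (A *v x t + B *v u t))) + (-2*C) * exp (-2*C*t) * (y t \<bullet> y t))) (at t)"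
      using dphi[of t] t by simp
    have "exp (-2*C*t) * (2 * (y t \<bullet> P (A *v x t + B *v u t))) \<le> exp (-2*C*t) * (2 * C * (y t \<bullet> y t))"
      using key[of t] by (intro mult_left_mono) auto
    then show "\<exists>d. (phi has_real_derivative d) (at t) \<and> d \<le> 0"
      using d by (intro exI[of _ "exp (-2*C*t) * (2 * (y t \<bullet> P (A *v x t + B *v u t))) + (-2*C) * exp (-2*C*t) * (y t \<bullet> y t)"]) (auto simp: algebra_simps)
  qed
  moreover have "phi 0 = 0" by (simp add: phi_def y_def x0 P.zero)
  moreover have "phi T > 0" using Px1 by (simp add: phi_def y_def xT)
  ultimately show False by simp
qed


lemma lim_aux: "((\<lambda>l::real. c * (l ^ k / exp l) + d / (- C + l)) \<longlongrightarrow> 0) at_top"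
proof -
  have a: "((\<lambda>l::real. c * (l ^ k / exp l)) \<longlongrightarrow> c * 0) at_top"
    by (intro tendsto_mult tendsto_const tendsto_power_div_exp_0)
  have b: "((\<lambda>l::real. d / (- C + l)) \<longlongrightarrow> 0) at_top"
    by (intro tendsto_divide_0[OF tendsto_const] filterlim_at_top_imp_at_infinity
        filterlim_tendsto_add_at_top[OF tendsto_const] filterlim_ident)
  show ?thesis using tendsto_add[OF a b] by simp
qed

lemma decay_step:
  fixes A :: "real^'n^'n" and R :: "real \<Rightarrow> real^'n \<Rightarrow> real^'n"
  assumes C: "C > 0"
    and R1: "\<And>l r. l > C \<Longrightarrow> l *\<^sub>R R l r = r + R l (A *v r)"
    and R3: "\<And>l r. l > C \<Longrightarrow> norm (R l r) \<le> norm r / (l - C)"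
    and Q: "eventually (\<lambda>l. \<bar>y \<bullet> R l r\<bar> \<le> c * (l ^ k / exp l)) at_top"
  shows "y \<bullet> r = 0" "eventually (\<lambda>l. \<bar>y \<bullet> R l (A *v r)\<bar> \<le> c * (l ^ Suc k / exp l)) at_top"
proof -
  have eq: "y \<bullet> r = l * (y \<bullet> R l r) - y \<bullet> R l (A *v r)" if "l > C" for l
  proof -
    have "y \<bullet> (l *\<^sub>R R l r) = y \<bullet> r + y \<bullet> R l (A *v r)" using R1[OF that] by (simp add: inner_add_right)
    then show ?thesis by simp
  qed
  have ev: "eventually (\<lambda>l. \<bar>y \<bullet> r\<bar> \<le> c * (l ^ Suc k / exp l) + (norm y * norm (A *v r)) / (- C + l)) at_top"
    using Q eventually_gt_at_top[of C]
  proof eventually_elim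
    case (elim l)
    have lpos: "l > 0" using elim C by simp
    have "\<bar>y \<bullet> r\<bar> \<le> \<bar>l * (y \<bullet> R l r)\<bar> + \<bar>y \<bullet> R l (A *v r)\<bar>"
      using eq[OF elim(2)] by simp
    also have "\<bar>l * (y \<bullet> R l r)\<bar> = l * \<bar>y \<bullet> R l r\<bar>" using lpos by (simp add: abs_mult)
    also have "\<dots> \<le> l * (c * (l ^ k / exp l))"
      using elim(1) lpos by (intro mult_left_mono) auto
    also have "\<bar>y \<bullet> R l (A *v r)\<bar> \<le> norm y * norm (R l (A *v r))" by (rule Cauchy_Schwarz_ineq2)
    also have "\<dots> \<le> norm y * (norm (A *v r) / (l - C))" using R3[OF elim(2), of "A *v r"] by (intro mult_left_mono) auto
    finally show ?case by (simp add: field_simps)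
  qed
  have "\<bar>y \<bullet> r\<bar> \<le> 0"
    by (rule tendsto_lowerbound[OF lim_aux ev]) simp
  then show yr: "y \<bullet> r = 0" by simp
  show "eventually (\<lambda>l. \<bar>y \<bullet> R l (A *v r)\<bar> \<le> c * (l ^ Suc k / exp l)) at_top"
    using Q eventually_gt_at_top[of C]
  proof eventually_elim
    case (elim l)
    have lpos: "l > 0" using elim C by simp
    have "\<bar>y \<bullet> R l (A *v r)\<bar> = \<bar>l * (y \<bullet> R l r)\<bar>" using eq[OF elim(2)] yr by simp
    also have "\<dots> = l * \<bar>y \<bullet> R l r\<bar>" using lpos by (simp add: abs_mult)
    also have "\<dots> \<le> l * (c * (l ^ k / exp l))"
      using elim(1) lpos by (intro mult_left_mono) auto
    finally show ?case by (simp add: field_simps)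
  qed
qed

lemma decay_zero:
  fixes A :: "real^'n^'n" and B :: "real^'m^'n" and R :: "real \<Rightarrow> real^'n \<Rightarrow> real^'n"
  assumes KU: "krylov A B = UNIV"
    and C: "C > 0"
    and R1: "\<And>l r. l > C \<Longrightarrow> l *\<^sub>R R l r = r + R l (A *v r)"
    and R3: "\<And>l r. l > C \<Longrightarrow> norm (R l r) \<le> norm r / (l - C)"
    and Q: "\<And>w. \<exists>c. eventually (\<lambda>l. \<bar>y \<bullet> R l (B *v w)\<bar> \<le> c * (l ^ 0 / exp l)) at_top"
  shows "y = 0"
proof -
  have it: "\<exists>c. eventually (\<lambda>l. \<bar>y \<bullet> R l ((((*v) A) ^^ k) (B *v w))\<bar> \<le> c * (l ^ k / exp l)) at_top" for k w
  proof (induction k)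
    case 0 then show ?case using Q by simp
  next
    case (Suc k)
    then obtain c where "eventually (\<lambda>l. \<bar>y \<bullet> R l ((((*v) A) ^^ k) (B *v w))\<bar> \<le> c * (l ^ k / exp l)) at_top" by blast
    from decay_step(2)[OF C R1 R3 this] show ?case by auto
  qed
  have orth: "y \<bullet> ((((*v) A) ^^ k) (B *v w)) = 0" for k w
  proof -
    obtain c where "eventually (\<lambda>l. \<bar>y \<bullet> R l ((((*v) A) ^^ k) (B *v w))\<bar> \<le> c * (l ^ k / exp l)) at_top"
      using it by blast
    from decay_step(1)[OF C R1 R3 this] show ?thesis .
  qed
  define S where "S = {z. \<forall>k. y \<bullet> ((((*v) A) ^^ k) z) = 0}"
  have lin: "((((*v) A) ^^ k) (a *\<^sub>R z1 + b *\<^sub>R z2)) = a *\<^sub>R ((((*v) A) ^^ k) z1) + b *\<^sub>R ((((*v) A) ^^ k) z2)" for k a b z1 z2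
    by (induction k) (simp_all add: matrix_vector_right_distrib matrix_vector_mult_scaleR)
  have S0: "0 \<in> S"
  proof -
    have "((((*v) A) ^^ k) 0) = 0" for k by (induction k) simp_all
    then show ?thesis by (simp add: S_def)
  qed
  have Sadd: "x + z \<in> S" if "x \<in> S" "z \<in> S" for x z
    using that lin[of _ 1 x 1 z] by (simp add: S_def inner_add_right)
  have Sscale: "c *\<^sub>R x \<in> S" if "x \<in> S" for x c
    using that lin[of _ c x 0 x] by (simp add: S_def)
  have Ssub: "subspace S"
    unfolding subspace_def using S0 Sadd Sscale by blast
  have "krylov A B \<subseteq> S"
  proof (rule krylov_min[OF Ssub])
    show "B *v w \<in> S" for w using orth by (simp add: S_def)
    show "A *v x \<in> S" if "x \<in> S" for x
    proof -
      have e: "((((*v) A) ^^ k) (A *v x)) = ((((*v) A) ^^ Suc k) x)" for k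
        by (simp only: funpow_Suc_right comp_apply)
      show ?thesis using that unfolding S_def by (simp only: e mem_Collect_eq) blast
    qed
  qed
  then have "y \<in> S" using KU by auto
  then have "y \<bullet> ((((*v) A) ^^ 0) y) = 0" unfolding S_def by blast
  then have "y \<bullet> y = 0" by simp
  then show ?thesis by simp
qed


lemma kry_imp_ct:
  fixes A :: "real^'n^'n" and B :: "real^'m^'n"
  assumes KU: "krylov A B = UNIV"
  shows "ct_controllable A B"
proof -
  have blA: "bounded_linear (\<lambda>x. A *v x)"
    by (simp add: linear_conv_bounded_linear)
  obtain C where C: "C > 0" "\<And>x. norm (A *v x) \<le> norm x * C"
    using bounded_linear.pos_bounded[OF blA] by blast
  have injl: "v = 0" if l: "l > C" and v: "l *\<^sub>R v - A *v v = 0" for l v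
  proof -
    have Av: "A *v v = l *\<^sub>R v" using v by simp
    have "l * norm v = norm (A *v v)" using l C(1) by (simp add: Av)
    also have "\<dots> \<le> norm v * C" by (rule C(2))
    finally have "(l - C) * norm v \<le> 0" by (simp add: algebra_simps)
    then have "norm v \<le> 0" using l by (simp add: mult_le_0_iff)
    then show ?thesis by simp
  qed
  have surjl: "\<exists>v. l *\<^sub>R v - A *v v = r" if l: "l > C" for l r
  proof -
    define f where "f = (\<lambda>v::real^'n. l *\<^sub>R v - A *v v)"
    have lf: "linear f" unfolding f_def
      by (intro linear_compose_sub linear_scaleR linear_id[unfolded id_def] matrix_vector_mul_linear)
    have "inj f"
    proof (rule injI)
      fix a b assume "f a = f b"
      then have "l *\<^sub>R (a - b) - A *v (a - b) = 0"
        by (simp add: f_def algebra_simps)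
      then have "a - b = 0" by (rule injl[OF l])
      then show "a = b" by simp
    qed
    then have sf: "surj f" using linear_injective_imp_surjective[OF lf] by simp
    obtain v where "r = f v" using surjD[OF sf, of r] by blast
    then show ?thesis unfolding f_def by blast
  qed
  define R where "R = (\<lambda>l r. SOME v. l *\<^sub>R v - A *v (v::real^'n) = r)"
  have R1': "l *\<^sub>R R l r - A *v R l r = r" if "l > C" for l r
    unfolding R_def using someI_ex[OF surjl[OF that]] .
  have uniq: "v = R l r" if l: "l > C" and v: "l *\<^sub>R v - A *v v = r" for l r v
  proof -
    have "l *\<^sub>R (v - R l r) - A *v (v - R l r) = 0"
      using v R1'[OF l, of r] by (simp add: algebra_simps)
    then have "v - R l r = 0" by (rule injl[OF l])
    then show ?thesis by simp
  qed
  have R4: "R l (A *v r) = A *v R l r" if l: "l > C" for l r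
  proof -
    have "l *\<^sub>R (A *v R l r) - A *v (A *v R l r) = A *v (l *\<^sub>R R l r - A *v R l r)"
      by (simp add: algebra_simps)
    also have "\<dots> = A *v r" using R1'[OF l] by simp
    finally show ?thesis using uniq[OF l] by metis
  qed
  have R1: "l *\<^sub>R R l r = r + R l (A *v r)" if l: "l > C" for l r
    using R1'[OF l, of r] R4[OF l, of r] by (simp add: algebra_simps)
  have R3: "norm (R l r) \<le> norm r / (l - C)" if l: "l > C" for l r
  proof -
    have "l * norm (R l r) = norm (l *\<^sub>R R l r)" using l C(1) by simp
    also have "\<dots> = norm (r + A *v R l r)" using R1'[OF l, of r] by (simp add: algebra_simps)
    also have "\<dots> \<le> norm r + norm (R l r) * C" using norm_triangle_ineq[of r "A *v R l r"] C(2)[of "R l r"] by simp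
    finally have "(l - C) * norm (R l r) \<le> norm r" by (simp add: algebra_simps)
    then show ?thesis using l by (simp add: pos_le_divide_eq mult.commute)
  qed
  define traj where "traj = (\<lambda>(x::real \<Rightarrow> real^'n) (u::real \<Rightarrow> real^'m). continuous_on {0..1} u \<and>
      (\<forall>t\<in>{0..1}. (x has_vector_derivative (A *v x t + B *v u t)) (at t within {0..1})))"
  define S where "S = {p. \<exists>x u. traj x u \<and> p = (x 0, x 1)}"
  have S0: "0 \<in> S"
  proof -
    have "traj (\<lambda>_. 0) (\<lambda>_. 0)" unfolding traj_def by simp
    then show ?thesis unfolding S_def by (auto simp: zero_prod_def)
  qed
  have Sadd: "p1 + p2 \<in> S" if hp: "p1 \<in> S" "p2 \<in> S" for p1 p2
  proof -
    obtain x1 u1 where 1: "traj x1 u1" "p1 = (x1 0, x1 1)" using hp(1) S_def by blast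
    obtain x2 u2 where 2: "traj x2 u2" "p2 = (x2 0, x2 1)" using hp(2) S_def by blast
    have "traj (\<lambda>t. x1 t + x2 t) (\<lambda>t. u1 t + u2 t)"
      unfolding traj_def
    proof (intro conjI ballI)
      show "continuous_on {0..1} (\<lambda>t. u1 t + u2 t)" using 1 2 unfolding traj_def by (intro continuous_on_add) auto
      fix t :: real assume t: "t \<in> {0..1}"
      have "((\<lambda>t. x1 t + x2 t) has_vector_derivative ((A *v x1 t + B *v u1 t) + (A *v x2 t + B *v u2 t))) (at t within {0..1})"
        using 1 2 t unfolding traj_def by (intro has_vector_derivative_add) auto
      then show "((\<lambda>t. x1 t + x2 t) has_vector_derivative (A *v (x1 t + x2 t) + B *v (u1 t + u2 t))) (at t within {0..1})"
        by (simp add: algebra_simps)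
    qed
    then show ?thesis unfolding S_def using 1 2 by auto
  qed
  have Sscale: "c *\<^sub>R p \<in> S" if hp: "p \<in> S" for p c
  proof -
    obtain x u where 1: "traj x u" "p = (x 0, x 1)" using hp S_def by blast
    have "traj (\<lambda>t. c *\<^sub>R x t) (\<lambda>t. c *\<^sub>R u t)"
      unfolding traj_def
    proof (intro conjI ballI)
      show "continuous_on {0..1} (\<lambda>t. c *\<^sub>R u t)" using 1 unfolding traj_def by (intro continuous_on_scaleR) auto
      fix t :: real assume t: "t \<in> {0..1}"
      have "((\<lambda>t. c *\<^sub>R x t) has_vector_derivative c *\<^sub>R (A *v x t + B *v u t)) (at t within {0..1})"
        using 1 t unfolding traj_def by (intro bounded_linear.has_vector_derivative[OF bounded_linear_scaleR_right]) auto
      then show "((\<lambda>t. c *\<^sub>R x t) has_vector_derivative (A *v (c *\<^sub>R x t) + B *v (c *\<^sub>R u t))) (at t within {0..1})"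
        by (simp add: algebra_simps)
    qed
    then show ?thesis unfolding S_def using 1 by auto
  qed
  have Ssub: "subspace S" unfolding subspace_def using S0 Sadd Sscale by blast
  have gen: "(R l (B *v w), exp l *\<^sub>R R l (B *v w)) \<in> S" if l: "l > C" for l w
  proof -
    define v where "v = R l (B *v w)"
    have vr: "l *\<^sub>R v - A *v v = B *v w" unfolding v_def by (rule R1'[OF l])
    have "traj (\<lambda>t. exp (l * t) *\<^sub>R v) (\<lambda>t. exp (l * t) *\<^sub>R w)"
      unfolding traj_def
    proof (intro conjI ballI)
      show "continuous_on {0..1} (\<lambda>t. exp (l * t) *\<^sub>R w)" by (intro continuous_intros)
      fix t :: real assume t: "t \<in> {0..1}"
      have de: "((\<lambda>t. exp (l * t)) has_field_derivative (l * exp (l * t))) (at t within {0..1})"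
        by (auto intro!: derivative_eq_intros)
      have "((\<lambda>t. exp (l * t) *\<^sub>R v) has_vector_derivative (exp (l * t) *\<^sub>R 0 + (l * exp (l * t)) *\<^sub>R v)) (at t within {0..1})"
        by (rule has_vector_derivative_scaleR[OF de has_vector_derivative_const])
      moreover have "exp (l * t) *\<^sub>R 0 + (l * exp (l * t)) *\<^sub>R v = A *v (exp (l * t) *\<^sub>R v) + B *v (exp (l * t) *\<^sub>R w)"
      proof -
        have "A *v (exp (l * t) *\<^sub>R v) + B *v (exp (l * t) *\<^sub>R w) = exp (l * t) *\<^sub>R (A *v v + B *v w)"
          by (simp add: matrix_vector_mult_scaleR scaleR_add_right)
        also have "A *v v + B *v w = l *\<^sub>R v" using vr by (simp add: algebra_simps)
        finally show ?thesis by simp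
      qed
      ultimately show "((\<lambda>t. exp (l * t) *\<^sub>R v) has_vector_derivative (A *v (exp (l * t) *\<^sub>R v) + B *v (exp (l * t) *\<^sub>R w))) (at t within {0..1})"
        by simp
    qed
    moreover have "(R l (B *v w), exp l *\<^sub>R R l (B *v w)) = ((\<lambda>t. exp (l * t) *\<^sub>R v) 0, (\<lambda>t. exp (l * t) *\<^sub>R v) 1)"
      by (simp add: v_def)
    ultimately show ?thesis unfolding S_def by blast
  qed
  have SU: "S = UNIV"
  proof (rule ccontr)
    assume "S \<noteq> UNIV"
    moreover have "span S = S" using Ssub by (rule span_eq_iff[THEN iffD2])
    ultimately have "span S \<noteq> UNIV" by metis
    then have "dim S \<noteq> DIM((real^'n) \<times> (real^'n))" using dim_eq_full by blast
    then have "dim S < DIM((real^'n) \<times> (real^'n))" using dim_subset_UNIV[of S] by linarith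
    then obtain z where z: "z \<noteq> 0" "\<And>y. y \<in> span S \<Longrightarrow> orthogonal z y"
      using orthogonal_to_subspace_exists by blast
    obtain p q where pq: "z = (p, q)" by (cases z)
    have rel: "p \<bullet> R l (B *v w) + exp l * (q \<bullet> R l (B *v w)) = 0" if l: "l > C" for l w
      using z(2)[OF span_base[OF gen[OF l, of w]]] by (simp add: pq orthogonal_def)
    have q0: "q = 0"
    proof (rule decay_zero[OF KU C(1) R1 R3])
      fix w
      show "\<exists>c. eventually (\<lambda>l. \<bar>q \<bullet> R l (B *v w)\<bar> \<le> c * (l ^ 0 / exp l)) at_top"
      proof (intro exI[of _ "norm p * norm (B *v w)"])
        show "eventually (\<lambda>l. \<bar>q \<bullet> R l (B *v w)\<bar> \<le> norm p * norm (B *v w) * (l ^ 0 / exp l)) at_top"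
          using eventually_gt_at_top[of "C + 1"]
        proof eventually_elim
          case (elim l)
          have l: "l > C" using elim C by simp
          have e: "p \<bullet> R l (B *v w) = - (exp l * (q \<bullet> R l (B *v w)))" using rel[OF l, of w] by linarith
          then have "\<bar>p \<bullet> R l (B *v w)\<bar> = exp l * \<bar>q \<bullet> R l (B *v w)\<bar>" by (simp add: abs_mult)
          then have "\<bar>q \<bullet> R l (B *v w)\<bar> = \<bar>p \<bullet> R l (B *v w)\<bar> / exp l" by (simp add: field_simps)
          also have "\<bar>p \<bullet> R l (B *v w)\<bar> \<le> norm p * norm (R l (B *v w))" by (rule Cauchy_Schwarz_ineq2)
          also have "\<dots> \<le> norm p * (norm (B *v w) / (l - C))" using R3[OF l, of "B *v w"] by (intro mult_left_mono) auto
          also have "\<dots> \<le> norm p * norm (B *v w)"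
          proof -
            have "norm (B *v w) / (l - C) \<le> norm (B *v w)" using elim by (simp add: divide_le_eq mult_le_cancel_left1 )
            then show ?thesis by (intro mult_left_mono) auto
          qed
          finally show ?case by (simp add: divide_right_mono)
        qed
      qed
    qed (auto intro: R1 R3)
    have p0: "p = 0"
    proof (rule decay_zero[OF KU C(1) R1 R3])
      fix w
      show "\<exists>c. eventually (\<lambda>l. \<bar>p \<bullet> R l (B *v w)\<bar> \<le> c * (l ^ 0 / exp l)) at_top"
      proof (intro exI[of _ 0])
        show "eventually (\<lambda>l. \<bar>p \<bullet> R l (B *v w)\<bar> \<le> 0 * (l ^ 0 / exp l)) at_top"
          using eventually_gt_at_top[of C]
        proof eventually_elim
          case (elim l)
          then show ?case using rel[OF elim, of w] q0 by simp
        qed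
      qed
    qed (auto intro: R1 R3)
    show False using z(1) pq p0 q0 by (simp add: zero_prod_def)
  qed
  show ?thesis
    unfolding ct_controllable_def
  proof (intro allI)
    fix x0 x1 :: "real^'n"
    have "(x0, x1) \<in> S" using SU by simp
    then obtain x u where "traj x u" "x 0 = x0" "x 1 = x1" unfolding S_def by auto
    then show "\<exists>T>0. \<exists>u x. continuous_on {0..T} u \<and> x 0 = x0 \<and> x T = x1 \<and>
        (\<forall>t\<in>{0..T}. (x has_vector_derivative A *v x t + B *v u t) (at t within {0..T}))"
      unfolding traj_def by (intro exI[of _ 1]) auto
  qed
qed


theorem corollary10:
  fixes a b c h :: real
    and W :: "real^'n^'n"
    and \<delta> :: "'n \<Rightarrow> real"
  assumes "a \<noteq> 0"
    and "\<forall>i. W $ i $ i = 0"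
    and "\<forall>i. \<delta> i \<in> {0, 1}"
    and "h > 0"
    and "\<not> (\<exists>v. v \<noteq> 0 \<and>
              (exp (a*h) *\<^sub>R mat 1 + ((c/a) * (exp (a*h) - 1)) *\<^sub>R W) *v v = 0 *\<^sub>R v)"
  shows "dt_controllable
           (exp (a*h) *\<^sub>R mat 1 + ((c/a) * (exp (a*h) - 1)) *\<^sub>R W)
           (((b/a) * (exp (a*h) - 1)) *\<^sub>R (\<chi> i j. if i = j then \<delta> i else 0))
         \<longleftrightarrow> ct_controllable (a *\<^sub>R mat 1 + c *\<^sub>R W) (b *\<^sub>R (\<chi> i j. if i = j then \<delta> i else 0))"
proof -
  define D :: "real^'n^'n" where "D = (\<chi> i j. if i = j then \<delta> i else 0)"
  define A where "A = a *\<^sub>R mat 1 + c *\<^sub>R W"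
  define Bm where "Bm = b *\<^sub>R D"
  define \<tau> where "\<tau> = (exp (a*h) - 1) / a"
  have ah: "a * h \<noteq> 0" using assms(1,4) by simp
  have "exp (a*h) \<noteq> 1" using ah by simp
  then have \<tau>0: "\<tau> \<noteq> 0" using assms(1) by (simp add: \<tau>_def)
  have Phi: "exp (a*h) *\<^sub>R mat 1 + ((c/a) * (exp (a*h) - 1)) *\<^sub>R W = mat 1 + \<tau> *\<^sub>R A"
    unfolding vec_eq_iff A_def \<tau>_def using assms(1) by (auto simp: mat_def field_simps)
  have Psi: "((b/a) * (exp (a*h) - 1)) *\<^sub>R D = \<tau> *\<^sub>R Bm"
    unfolding Bm_def \<tau>_def by (simp add: scaleR_scaleR)
  have inj: "v = 0" if "(mat 1 + \<tau> *\<^sub>R A) *v v = 0" for v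
    using assms(5) that Phi by auto
  have "dt_controllable (mat 1 + \<tau> *\<^sub>R A) (\<tau> *\<^sub>R Bm) \<longleftrightarrow> krylov (mat 1 + \<tau> *\<^sub>R A) (\<tau> *\<^sub>R Bm) = UNIV"
    by (rule dt_kry) (use inj in blast)
  also have "\<dots> \<longleftrightarrow> krylov A Bm = UNIV" by (simp add: krylov_scale[OF \<tau>0])
  also have "\<dots> \<longleftrightarrow> ct_controllable A Bm" using ct_imp_kry kry_imp_ct by blast
  finally have X: "dt_controllable (mat 1 + \<tau> *\<^sub>R A) (\<tau> *\<^sub>R Bm) \<longleftrightarrow> ct_controllable A Bm" .
  show ?thesis unfolding Phi Psi[unfolded D_def] using X by (simp only: A_def Bm_def D_def)
qed

end
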